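(* Let $\Delta$ be a local derivation of $\mathcal{S}$ with $\Delta(L_0)=\Delta(L_1)=0$. Then $\Delta(L_m)=0$ for all $m\in\mathbb{Z}$.
   Context: $\mathcal{S}$ is the centerless super Virasoro algebra: the Lie superalgebra over $\mathbb{C}$ with basis $\{L_m,G_n: m,n\in\mathbb{Z}\}$, $L_m$ even, $G_n$ odd, and brackets $[L_m,L_n]=(m-n)L_{m+n}$, $[L_m,G_r]=(\frac m2-r)G_{m+r}$, $[G_r,G_s]=2L_{r+s}$. A homogeneous linear map $D$ of parity $|D|$ is a derivation if $D([x,y])=[D(x),y]+(-1)^{|D||x|}[x,D(y)]$ for homogeneous $x,y$; derivations are sums of even and odd ones. A linear map $\Delta:\mathcal{S}\to\mathcal{S}$ is a local derivation if for every $x$ there is a derivation $D_x$ with $\Delta(x)=D_x(x)$. *)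

theory Defs
  imports Complex_Main
begin

text \<open>Elements of the centerless super Virasoro algebra S are encoded as pairs
  (a, b) of finitely supported coefficient functions: the element
  sum_m a m L_m + sum_r b r G_r.\<close>

type_synonym sv = "(int \<Rightarrow> complex) \<times> (int \<Rightarrow> complex)"

definition fin_supp :: "(int \<Rightarrow> complex) \<Rightarrow> bool" where
  "fin_supp f \<longleftrightarrow> finite {n. f n \<noteq> 0}"

definition SV :: "sv set" where
  "SV = {x. fin_supp (fst x) \<and> fin_supp (snd x)}"

definition sv_zero :: sv where
  "sv_zero = (\<lambda>_. 0, \<lambda>_. 0)"

definition sv_add :: "sv \<Rightarrow> sv \<Rightarrow> sv" where
  "sv_add x y = (\<lambda>n. fst x n + fst y n, \<lambda>n. snd x n + snd y n)"

definition sv_smul :: "complex \<Rightarrow> sv \<Rightarrow> sv" where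
  "sv_smul c x = (\<lambda>n. c * fst x n, \<lambda>n. c * snd x n)"

definition Lb :: "int \<Rightarrow> sv" where
  "Lb m = (\<lambda>n. if n = m then 1 else 0, \<lambda>_. 0)"

definition Gb :: "int \<Rightarrow> sv" where
  "Gb r = (\<lambda>_. 0, \<lambda>n. if n = r then 1 else 0)"

text \<open>The super bracket, the bilinear extension of
  [L_m,L_n]=(m-n)L_{m+n}, [L_m,G_r]=(m/2-r)G_{m+r}, [G_r,L_m]=-(m/2-r)G_{m+r},
  [G_r,G_s]=2L_{r+s}.\<close>
definition sv_br :: "sv \<Rightarrow> sv \<Rightarrow> sv" where
  "sv_br x y =
    (\<lambda>k. (\<Sum>m\<in>{m. fst x m \<noteq> 0}. of_int (m - (k - m)) * fst x m * fst y (k - m))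
        + (\<Sum>r\<in>{r. snd x r \<noteq> 0}. 2 * snd x r * snd y (k - r)),
     \<lambda>k. (\<Sum>m\<in>{m. fst x m \<noteq> 0}. (of_int m / 2 - of_int (k - m)) * fst x m * snd y (k - m))
        - (\<Sum>m\<in>{m. fst y m \<noteq> 0}. (of_int m / 2 - of_int (k - m)) * fst y m * snd x (k - m)))"

text \<open>Homogeneous elements: parity False = even (span of the L_m),
  parity True = odd (span of the G_r).\<close>
definition sv_hom :: "bool \<Rightarrow> sv \<Rightarrow> bool" where
  "sv_hom p x \<longleftrightarrow> x \<in> SV \<and> (if p then fst x = (\<lambda>_. 0) else snd x = (\<lambda>_. 0))"

definition sv_linear :: "(sv \<Rightarrow> sv) \<Rightarrow> bool" where
  "sv_linear D \<longleftrightarrow> (\<forall>x\<in>SV. D x \<in> SV)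
     \<and> (\<forall>x\<in>SV. \<forall>y\<in>SV. D (sv_add x y) = sv_add (D x) (D y))
     \<and> (\<forall>c. \<forall>x\<in>SV. D (sv_smul c x) = sv_smul c (D x))"

definition hom_derivation :: "bool \<Rightarrow> (sv \<Rightarrow> sv) \<Rightarrow> bool" where
  "hom_derivation p D \<longleftrightarrow> sv_linear D
     \<and> (\<forall>q x. sv_hom q x \<longrightarrow> sv_hom (p \<noteq> q) (D x))
     \<and> (\<forall>q x y. sv_hom q x \<longrightarrow> y \<in> SV \<longrightarrow>
          D (sv_br x y) = sv_add (sv_br (D x) y)
                                 (sv_smul (if p \<and> q then -1 else 1) (sv_br x (D y))))"

definition derivation :: "(sv \<Rightarrow> sv) \<Rightarrow> bool" where
  "derivation D \<longleftrightarrow> (\<exists>D0 D1. hom_derivation False D0 \<and> hom_derivation True D1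
     \<and> (\<forall>x\<in>SV. D x = sv_add (D0 x) (D1 x)))"

definition local_derivation :: "(sv \<Rightarrow> sv) \<Rightarrow> bool" where
  "local_derivation \<Delta> \<longleftrightarrow> sv_linear \<Delta>
     \<and> (\<forall>x\<in>SV. \<exists>D. derivation D \<and> \<Delta> x = D x)"

end

theory Submission
  imports Defs "HOL-Computational_Algebra.Polynomial"
begin


lemma Lb_SV: "Lb m \<in> SV"
  unfolding SV_def fin_supp_def Lb_def by auto

lemma SV_add: "x \<in> SV \<Longrightarrow> y \<in> SV \<Longrightarrow> sv_add x y \<in> SV"
proof -
  have a: "{n. f n + g n \<noteq> 0} \<subseteq> {n. f n \<noteq> 0} \<union> {n. g n \<noteq> 0}" for f g :: "int \<Rightarrow> complex" by auto
  show "x \<in> SV \<Longrightarrow> y \<in> SV \<Longrightarrow> sv_add x y \<in> SV"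
  unfolding SV_def fin_supp_def sv_add_def
  by (auto intro: finite_subset[OF a])
qed

lemma SV_smul: "x \<in> SV \<Longrightarrow> sv_smul c x \<in> SV"
  unfolding SV_def fin_supp_def sv_smul_def
  by (auto elim: finite_subset[rotated])

lemma supp_Lb: "{j. fst (Lb n) j \<noteq> 0} = {n}" "{j. snd (Lb n) j \<noteq> 0} = {}"
  by (auto simp: Lb_def)

lemma br_L_u:
  "fst (sv_br (Lb n) u) k = of_int (2*n - k) * fst u (k - n)"
  "snd (sv_br (Lb n) u) k = (3 * of_int n / 2 - of_int k) * snd u (k - n)"
  unfolding sv_br_def supp_Lb by (auto simp: Lb_def algebra_simps)

lemma sum_delta_shift:
  fixes f :: "int \<Rightarrow> complex"
  assumes "finite S"
  shows "(\<Sum>j\<in>S. f j * (if k - j = m then 1 else 0)) = (if k - m \<in> S then f (k - m) else 0)"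
proof -
  have "(\<Sum>j\<in>S. f j * (if k - j = m then 1 else 0)) = (\<Sum>j\<in>S. if j = k - m then f j else 0)"
    by (rule sum.cong) auto
  also have "\<dots> = (if k - m \<in> S then f (k - m) else 0)"
    using assms by (simp add: sum.delta)
  finally show ?thesis .
qed

lemma br_u_L:
  assumes "u \<in> SV"
  shows "fst (sv_br u (Lb m)) k = of_int (k - 2*m) * fst u (k - m)"
    and "snd (sv_br u (Lb m)) k = (of_int k - 3 * of_int m / 2) * snd u (k - m)"
proof -
  have fin: "finite {j. fst u j \<noteq> 0}" using assms by (auto simp: SV_def fin_supp_def)
  have "(\<Sum>j\<in>{j. fst u j \<noteq> 0}. of_int (j - (k - j)) * fst u j * fst (Lb m) (k - j))
      = (\<Sum>j\<in>{j. fst u j \<noteq> 0}. (of_int (j - (k - j)) * fst u j) * (if k - j = m then 1 else 0))"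
    by (simp add: Lb_def)
  also have "\<dots> = of_int (k - 2*m) * fst u (k - m)"
    by (subst sum_delta_shift[OF fin]) (auto simp: algebra_simps)
  finally show "fst (sv_br u (Lb m)) k = of_int (k - 2*m) * fst u (k - m)"
    unfolding sv_br_def by (simp add: Lb_def)
  show "snd (sv_br u (Lb m)) k = (of_int k - 3 * of_int m / 2) * snd u (k - m)"
    unfolding sv_br_def supp_Lb by (simp add: Lb_def algebra_simps)
qed

lemma br_LL: "sv_br (Lb n) (Lb m) = sv_smul (of_int (n - m)) (Lb (n + m))"
  unfolding prod_eq_iff fun_eq_iff br_L_u by (auto simp: sv_smul_def Lb_def)

lemma hom_der_rec:
  assumes "hom_derivation p D"
  shows "of_int (n - m) * fst (D (Lb (n+m))) k
           = of_int (k - 2*m) * fst (D (Lb n)) (k - m) + of_int (2*n - k) * fst (D (Lb m)) (k - n)"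
    and "of_int (n - m) * snd (D (Lb (n+m))) k
           = (of_int k - 3*of_int m/2) * snd (D (Lb n)) (k - m) + (3*of_int n/2 - of_int k) * snd (D (Lb m)) (k - n)"
proof -
  have lin: "sv_linear D" and br: "\<And>q x y. sv_hom q x \<Longrightarrow> y \<in> SV \<Longrightarrow>
          D (sv_br x y) = sv_add (sv_br (D x) y)
                                 (sv_smul (if p \<and> q then -1 else 1) (sv_br x (D y)))"
    using assms unfolding hom_derivation_def by blast+
  have hom: "sv_hom False (Lb n)" by (simp add: sv_hom_def Lb_SV) (simp add: Lb_def)
  have e: "D (sv_br (Lb n) (Lb m)) = sv_add (sv_br (D (Lb n)) (Lb m)) (sv_smul 1 (sv_br (Lb n) (D (Lb m))))"
    using br[OF hom Lb_SV] by simp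
  have l: "D (sv_br (Lb n) (Lb m)) = sv_smul (of_int (n - m)) (D (Lb (n + m)))"
    using lin Lb_SV unfolding br_LL sv_linear_def by blast
  have DSV: "D (Lb n) \<in> SV" using lin Lb_SV unfolding sv_linear_def by blast
  from e l have "sv_smul (of_int (n - m)) (D (Lb (n + m))) = sv_add (sv_br (D (Lb n)) (Lb m)) (sv_smul 1 (sv_br (Lb n) (D (Lb m))))"
    by simp
  then have f: "fst (sv_smul (of_int (n - m)) (D (Lb (n + m)))) k = fst (sv_add (sv_br (D (Lb n)) (Lb m)) (sv_smul 1 (sv_br (Lb n) (D (Lb m))))) k"
    and s: "snd (sv_smul (of_int (n - m)) (D (Lb (n + m)))) k = snd (sv_add (sv_br (D (Lb n)) (Lb m)) (sv_smul 1 (sv_br (Lb n) (D (Lb m))))) k"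
    by simp_all
  show "of_int (n - m) * fst (D (Lb (n+m))) k
           = of_int (k - 2*m) * fst (D (Lb n)) (k - m) + of_int (2*n - k) * fst (D (Lb m)) (k - n)"
    using f by (simp add: sv_smul_def sv_add_def br_u_L[OF DSV] br_L_u)
  show "of_int (n - m) * snd (D (Lb (n+m))) k
           = (of_int k - 3*of_int m/2) * snd (D (Lb n)) (k - m) + (3*of_int n/2 - of_int k) * snd (D (Lb m)) (k - n)"
    using s by (simp add: sv_smul_def sv_add_def br_u_L[OF DSV] br_L_u)
qed

lemma der_parts:
  assumes "derivation D"
  obtains D0 D1 where "hom_derivation False D0" "hom_derivation True D1"
     "\<And>x. x \<in> SV \<Longrightarrow> D x = sv_add (D0 x) (D1 x)"
  using assms unfolding derivation_def by blast

lemma der_rec: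
  assumes "derivation D"
  shows "of_int (n - m) * fst (D (Lb (n+m))) k
           = of_int (k - 2*m) * fst (D (Lb n)) (k - m) + of_int (2*n - k) * fst (D (Lb m)) (k - n)"
    and "of_int (n - m) * snd (D (Lb (n+m))) k
           = (of_int k - 3*of_int m/2) * snd (D (Lb n)) (k - m) + (3*of_int n/2 - of_int k) * snd (D (Lb m)) (k - n)"
proof -
  obtain D0 D1 where h0: "hom_derivation False D0" and h1: "hom_derivation True D1"
     and s: "\<And>x. x \<in> SV \<Longrightarrow> D x = sv_add (D0 x) (D1 x)" using der_parts[OF assms] by blast
  have e: "D (Lb j) = sv_add (D0 (Lb j)) (D1 (Lb j))" for j using s Lb_SV by blast
  show "of_int (n - m) * fst (D (Lb (n+m))) k
           = of_int (k - 2*m) * fst (D (Lb n)) (k - m) + of_int (2*n - k) * fst (D (Lb m)) (k - n)"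
    unfolding e sv_add_def fst_conv snd_conv distrib_left hom_der_rec(1)[OF h0, of n m k] hom_der_rec(1)[OF h1, of n m k]
    by (simp add: algebra_simps)
  show "of_int (n - m) * snd (D (Lb (n+m))) k
           = (of_int k - 3*of_int m/2) * snd (D (Lb n)) (k - m) + (3*of_int n/2 - of_int k) * snd (D (Lb m)) (k - n)"
    unfolding e sv_add_def fst_conv snd_conv distrib_left hom_der_rec(2)[OF h0, of n m k] hom_der_rec(2)[OF h1, of n m k]
    by (simp add: algebra_simps)
qed

lemma der_lin:
  assumes "derivation D" "x \<in> SV" "y \<in> SV"
  shows "D (sv_add x y) = sv_add (D x) (D y)" "D (sv_smul c x) = sv_smul c (D x)" "D x \<in> SV"
proof -
  obtain D0 D1 where h0: "hom_derivation False D0" and h1: "hom_derivation True D1"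
     and s: "\<And>x. x \<in> SV \<Longrightarrow> D x = sv_add (D0 x) (D1 x)" using der_parts[OF assms(1)] by blast
  have l0: "sv_linear D0" and l1: "sv_linear D1" using h0 h1 by (auto simp: hom_derivation_def)
  show "D (sv_add x y) = sv_add (D x) (D y)"
    using s[OF SV_add[OF assms(2,3)]] s[OF assms(2)] s[OF assms(3)] l0 l1 assms(2,3)
    unfolding sv_linear_def by (auto simp: sv_add_def prod_eq_iff fun_eq_iff algebra_simps)
  show "D (sv_smul c x) = sv_smul c (D x)"
    using s[OF SV_smul[OF assms(2)]] s[OF assms(2)] l0 l1 assms(2)
    unfolding sv_linear_def by (auto simp: sv_add_def sv_smul_def prod_eq_iff fun_eq_iff algebra_simps)
  show "D x \<in> SV"
    using s[OF assms(2)] l0 l1 assms(2) SV_add unfolding sv_linear_def by auto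
qed

lemma addf_lin:
  fixes f :: "int \<Rightarrow> complex"
  assumes R: "\<And>n m. n \<noteq> m \<Longrightarrow> f (n + m) = f n + f m"
  shows "f j = of_int j * f 1"
proof -
  have f0: "f 0 = 0" using R[of 0 1] by simp
  have neg: "f (-k) = - f k" if "k \<noteq> 0" for k
    using R[of k "-k"] that f0 by (simp add: eq_neg_iff_add_eq_0 add.commute)
  have up: "f (k + 1) = f k + f 1" if "k \<noteq> 1" for k using R[of k 1] that by simp
  have f3: "f 3 = f 2 + f 1" using up[of 2] by simp
  have f4: "f 4 = f 3 + f 1" using up[of 3] by simp
  have f5: "f 5 = f 4 + f 1" using up[of 4] by simp
  have f5': "f 5 = f 3 + f 2" using R[of 3 2] by simp
  have f2: "f 2 = 2 * f 1" using f3 f4 f5 f5' by (simp add: algebra_simps)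
  have nat: "f (int k) = of_nat k * f 1" for k
  proof (induction k rule: nat_less_induct)
    case (1 k)
    show ?case
    proof (cases "k \<le> 2")
      case True
      then have "k = 0 \<or> k = 1 \<or> k = 2" by auto
      then show ?thesis using f0 f2 by auto
    next
      case False
      then obtain k' where k: "k = Suc k'" "k' \<ge> 2" by (cases k) auto
      have "f (int k) = f (int k' + 1)" using k by (simp add: add.commute)
      also have "\<dots> = f (int k') + f 1" using up[of "int k'"] k by simp
      also have "\<dots> = of_nat k' * f 1 + f 1" using 1 k by simp
      finally show ?thesis using k by (simp add: algebra_simps)
    qed
  qed
  show ?thesis
  proof (cases "j \<ge> 0")
    case True
    then show ?thesis using nat[of "nat j"] by simp
  next
    case False
    then have "f j = - f (int (nat (-j)))" using neg[of "-j"] by simp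
    then show ?thesis using nat[of "nat (-j)"] False by simp
  qed
qed

lemma addg_lin:
  fixes g :: "int \<Rightarrow> complex"
  assumes R: "\<And>n m. n \<noteq> m \<Longrightarrow> of_int (n - m) * g (n + m) = (of_int n - of_int m / 2) * g n + (of_int n / 2 - of_int m) * g m"
  shows "g j = of_int j * g 1"
proof -
  have g0: "g 0 = 0" using R[of 0 1] by simp
  have neg: "g (-k) = - g k" if "k \<noteq> 0" for k
  proof -
    have "of_int (2*k) * g 0 = (3/2 * of_int k) * (g k + g (-k))"
      using R[of k "-k"] that by (simp add: algebra_simps)
    then have "(3/2 * of_int k) * (g k + g (-k)) = 0" using g0 by simp
    then show ?thesis using that by (simp add: eq_neg_iff_add_eq_0 add.commute)
  qed
  have up: "of_int (1 - k) * g (k + 1) = (1 - of_int k / 2) * g 1 + (1/2 - of_int k) * g k" if "k \<noteq> 1" for k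
    using R[of 1 k] that by (simp add: add.commute)
  have e3: "- g 3 = (-3/2) * g 2" using up[of 2] by simp
  have e4: "-2 * g 4 = (-1/2) * g 1 + (-5/2) * g 3" using up[of 3] by simp
  have e5: "-3 * g 5 = (-1) * g 1 + (-7/2) * g 4" using up[of 4] by simp
  have e5': "g 5 = 2 * g 3 + (-1/2) * g 2" using R[of 3 2] by simp
  have g2: "g 2 = 2 * g 1" using e3 e4 e5 e5' by (simp add: field_simps) algebra
  have nat: "g (int k) = of_nat k * g 1" for k
  proof (induction k rule: nat_less_induct)
    case (1 k)
    show ?case
    proof (cases "k \<le> 2")
      case True
      then have "k = 0 \<or> k = 1 \<or> k = 2" by auto
      then show ?thesis using g0 g2 by auto
    next
      case False
      then obtain k' where k: "k = Suc k'" "k' \<ge> 2" by (cases k) auto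
      have ih: "g (int k') = of_nat k' * g 1" using 1 k by simp
      have ne: "(1 - of_int (int k')) \<noteq> (0::complex)" using k by simp
      have "of_int (1 - int k') * g (int k' + 1) = (1 - of_int k' / 2) * g 1 + (1/2 - of_int k') * (of_nat k' * g 1)"
        using up[of "int k'"] k ih by simp
      also have "\<dots> = (1 - of_int (int k')) * ((of_nat k' + 1) * g 1)"
        by (simp add: algebra_simps)
      finally have "(1 - of_int (int k')) * g (int k' + 1) = (1 - of_int (int k')) * ((of_nat k' + 1) * g 1)"
        by simp
      then have "g (int k' + 1) = (of_nat k' + 1) * g 1" using ne by simp
      then show ?thesis using k by (simp add: algebra_simps)
    qed
  qed
  show ?thesis
  proof (cases "j \<ge> 0")
    case True
    then show ?thesis using nat[of "nat j"] by simp
  next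
    case False
    then have "g j = - g (int (nat (-j)))" using neg[of "-j"] by simp
    then show ?thesis using nat[of "nat (-j)"] False by simp
  qed
qed

lemma inner_L:
  assumes "derivation D"
  shows "fst (D (Lb j)) k = of_int (k - 2*j) *
     (\<lambda>i. if i = 0 then - fst (D (Lb 1)) 1 else fst (D (Lb 0)) i / of_int i) (k - j)"
proof -
  let ?A = "\<lambda>j k. fst (D (Lb j)) k"
  have rec: "of_int (n - m) * ?A (n+m) k = of_int (k - 2*m) * ?A n (k - m) + of_int (2*n - k) * ?A m (k - n)"
    for n m k using der_rec(1)[OF assms] .
  have diag: "?A j j = of_int j * ?A 1 1" for j
  proof (rule addf_lin[where f = "\<lambda>j. ?A j j"])
    fix n m :: int assume "n \<noteq> m"
    have "of_int (n - m) * ?A (n+m) (n+m) = of_int (n - m) * (?A n n + ?A m m)"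
      using rec[of n m "n+m"] by (simp add: algebra_simps)
    then show "?A (n+m) (n+m) = ?A n n + ?A m m" using \<open>n \<noteq> m\<close> by simp
  qed
  show ?thesis
  proof (cases "k = j")
    case True
    then show ?thesis using diag[of j] by (simp add: algebra_simps)
  next
    case False
    have "of_int (k - j) * ?A j k = of_int (k - 2*j) * ?A 0 (k - j)"
      using rec[of 0 j k] by (simp add: algebra_simps)
    moreover have "of_int (k - j) \<noteq> (0::complex)" using False by simp
    ultimately show ?thesis using False by (simp add: field_simps)
  qed
qed

lemma inner_G:
  assumes "derivation D"
  shows "snd (D (Lb j)) k = (of_int k - 3 * of_int j / 2) *
     (\<lambda>i. if i = 0 then - 2 * snd (D (Lb 1)) 1 else snd (D (Lb 0)) i / of_int i) (k - j)"
proof -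
  let ?B = "\<lambda>j k. snd (D (Lb j)) k"
  have rec: "of_int (n - m) * ?B (n+m) k = (of_int k - 3*of_int m/2) * ?B n (k - m) + (3*of_int n/2 - of_int k) * ?B m (k - n)"
    for n m k using der_rec(2)[OF assms] .
  have diag: "?B j j = of_int j * ?B 1 1" for j
  proof (rule addg_lin[where g = "\<lambda>j. ?B j j"])
    fix n m :: int assume "n \<noteq> m"
    show "of_int (n - m) * ?B (n+m) (n+m) = (of_int n - of_int m / 2) * ?B n n + (of_int n / 2 - of_int m) * ?B m m"
      using rec[of n m "n+m"] by (simp add: algebra_simps)
  qed
  show ?thesis
  proof (cases "k = j")
    case True
    then show ?thesis using diag[of j] by (simp add: algebra_simps)
  next
    case False
    have "of_int (k - j) * ?B j k = (of_int k - 3 * of_int j / 2) * ?B 0 (k - j)"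
      using rec[of 0 j k] by (simp add: algebra_simps)
    moreover have "of_int (k - j) \<noteq> (0::complex)" using False by simp
    ultimately show ?thesis using False by (simp add: field_simps)
  qed
qed



lemma laurent_zero:
  fixes V :: "int \<Rightarrow> complex"
  assumes fin: "finite S" and supp: "{k. V k \<noteq> 0} \<subseteq> S"
    and ev: "\<And>z. z \<noteq> 0 \<Longrightarrow> (\<Sum>k\<in>S. V k * z powi k) = 0"
  shows "V k0 = 0"
proof (cases "k0 \<in> S")
  case False then show ?thesis using supp by auto
next
  case True
  define M where "M = Max (insert 0 (uminus ` S))"
  have M0: "M \<ge> 0" unfolding M_def using fin by (auto intro: Max_ge)
  have Mk: "- M \<le> k" if "k \<in> S" for k
  proof -
    have "-k \<le> M" unfolding M_def using fin that by (auto intro: Max_ge)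
    then show ?thesis by simp
  qed
  define N where "N = nat M"
  have NM: "int N = M" using M0 unfolding N_def by simp
  define p where "p = (\<Sum>k\<in>S. monom (V k) (nat (k + int N)))"
  have pz: "poly p z = 0" if "z \<noteq> 0" for z
  proof -
    have "poly p z = (\<Sum>k\<in>S. V k * z ^ nat (k + int N))"
      unfolding p_def poly_sum poly_monom ..
    also have "\<dots> = (\<Sum>k\<in>S. (V k * z powi k) * z ^ N)"
    proof (rule sum.cong[OF refl])
      fix k assume "k \<in> S"
      then have "k + int N \<ge> 0" using Mk NM by fastforce
      then have "z ^ nat (k + int N) = z powi (k + int N)"
        by (simp add: power_int_def)
      also have "\<dots> = z powi k * z powi (int N)" using that by (simp add: power_int_add)
      finally show "V k * z ^ nat (k + int N) = (V k * z powi k) * z ^ N" by simp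
    qed
    also have "\<dots> = (\<Sum>k\<in>S. V k * z powi k) * z ^ N" by (simp add: sum_distrib_right)
    also have "\<dots> = 0" using ev[OF that] by simp
    finally show ?thesis .
  qed
  have p0: "p = 0"
  proof (rule ccontr)
    assume "p \<noteq> 0"
    then have "finite {x. poly p x = 0}" by (rule poly_roots_finite)
    moreover have "{x::complex. x \<noteq> 0} \<subseteq> {x. poly p x = 0}" using pz by auto
    ultimately have "finite {x::complex. x \<noteq> 0}" by (rule finite_subset[rotated])
    moreover have "infinite {x::complex. x \<noteq> 0}"
    proof
      assume "finite {x::complex. x \<noteq> 0}"
      then have "finite (insert 0 {x::complex. x \<noteq> 0})" by simp
      moreover have "insert 0 {x::complex. x \<noteq> 0} = UNIV" by auto
      ultimately show False using infinite_UNIV_char_0 by metis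
    qed
    ultimately show False by contradiction
  qed
  have "coeff p (nat (k0 + int N)) = (\<Sum>k\<in>S. if nat (k + int N) = nat (k0 + int N) then V k else 0)"
    unfolding p_def coeff_sum coeff_monom ..
  also have "\<dots> = (\<Sum>k\<in>S. if k = k0 then V k else 0)"
  proof (rule sum.cong[OF refl])
    fix k assume "k \<in> S"
    then have "k + int N \<ge> 0" "k0 + int N \<ge> 0" using Mk NM True by fastforce+
    then have "(nat (k + int N) = nat (k0 + int N)) = (k = k0)" by auto
    then show "(if nat (k + int N) = nat (k0 + int N) then V k else 0) = (if k = k0 then V k else 0)" by simp
  qed
  also have "\<dots> = V k0" using fin True by simp
  finally show ?thesis using p0 by simp
qed

lemma shift_sum:
  fixes y :: "int \<Rightarrow> complex"
  assumes "finite Y" "{i. y i \<noteq> 0} \<subseteq> Y" "finite T" "(\<lambda>i. i + j) ` Y \<subseteq> T"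
  shows "(\<Sum>k\<in>T. c k * y (k - j)) = (\<Sum>i\<in>Y. c (i + j) * y i)"
proof -
  have "(\<Sum>k\<in>T. c k * y (k - j)) = (\<Sum>k\<in>(\<lambda>i. i + j) ` Y. c k * y (k - j))"
  proof (rule sum.mono_neutral_right[OF assms(3,4)])
    show "\<forall>k\<in>T - (\<lambda>i. i + j) ` Y. c k * y (k - j) = 0"
    proof
      fix k assume "k \<in> T - (\<lambda>i. i + j) ` Y"
      then have "k - j \<notin> Y" by (auto simp: image_iff)
      then show "c k * y (k - j) = 0" using assms(2) by auto
    qed
  qed
  also have "\<dots> = (\<Sum>i\<in>Y. c (i + j) * y i)"
    by (subst sum.reindex) (auto simp: inj_on_def)
  finally show ?thesis .
qed



lemma eval3:
  fixes y V ca cb cc :: "int \<Rightarrow> complex"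
  assumes fY: "finite Y" and sY: "{i. y i \<noteq> 0} \<subseteq> Y" and fS: "finite S" and sS: "{k. V k \<noteq> 0} \<subseteq> S"
    and V: "\<And>k. V k = ca k * y k + cb k * y (k - 1) + cc k * y (k - m)"
    and Z: "\<And>i. ca i * z powi i * y i + cb (i + 1) * z powi (i + 1) * y i + cc (i + m) * z powi (i + m) * y i = 0"
  shows "(\<Sum>k\<in>S. V k * z powi k) = 0"
proof -
  define T where "T = S \<union> Y \<union> (\<lambda>i. i + 1) ` Y \<union> (\<lambda>i. i + m) ` Y"
  have fT: "finite T" unfolding T_def using fY fS by auto
  have "(\<Sum>k\<in>S. V k * z powi k) = (\<Sum>k\<in>T. V k * z powi k)"
    by (rule sum.mono_neutral_left[OF fT]) (use sS in \<open>auto simp: T_def\<close>)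
  also have "\<dots> = (\<Sum>k\<in>T. (ca k * z powi k) * y (k - 0)) + (\<Sum>k\<in>T. (cb k * z powi k) * y (k - 1))
      + (\<Sum>k\<in>T. (cc k * z powi k) * y (k - m))"
    unfolding V by (simp add: sum.distrib algebra_simps)
  also have "\<dots> = (\<Sum>i\<in>Y. (ca (i + 0) * z powi (i + 0)) * y i) + (\<Sum>i\<in>Y. (cb (i + 1) * z powi (i + 1)) * y i)
      + (\<Sum>i\<in>Y. (cc (i + m) * z powi (i + m)) * y i)"
  proof -
    have s0: "(\<lambda>i. i + 0) ` Y \<subseteq> T" "(\<lambda>i. i + 1) ` Y \<subseteq> T" "(\<lambda>i. i + m) ` Y \<subseteq> T"
      unfolding T_def by auto
    show ?thesis
      using shift_sum[OF fY sY fT s0(1), of "\<lambda>k. ca k * z powi k"]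
        shift_sum[OF fY sY fT s0(2), of "\<lambda>k. cb k * z powi k"]
        shift_sum[OF fY sY fT s0(3), of "\<lambda>k. cc k * z powi k"]
      by simp
  qed
  also have "\<dots> = (\<Sum>i\<in>Y. ca i * z powi i * y i + cb (i + 1) * z powi (i + 1) * y i + cc (i + m) * z powi (i + m) * y i)"
    by (simp add: sum.distrib)
  also have "\<dots> = 0" using Z by simp
  finally show ?thesis .
qed


theorem lemma3p3:
  assumes "local_derivation \<Delta>"
    and "\<Delta> (Lb 0) = sv_zero"
    and "\<Delta> (Lb 1) = sv_zero"
  shows "\<forall>m. \<Delta> (Lb m) = sv_zero"
proof
  fix m :: int
  have lin: "sv_linear \<Delta>" and loc: "\<And>x. x \<in> SV \<Longrightarrow> \<exists>D. derivation D \<and> \<Delta> x = D x"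
    using assms(1) unfolding local_derivation_def by blast+
  have Dadd: "\<Delta> (sv_add x y) = sv_add (\<Delta> x) (\<Delta> y)" if "x \<in> SV" "y \<in> SV" for x y
    using lin that unfolding sv_linear_def by blast
  have Dsmul: "\<Delta> (sv_smul c x) = sv_smul c (\<Delta> x)" if "x \<in> SV" for c x
    using lin that unfolding sv_linear_def by blast
  have DSV: "\<Delta> x \<in> SV" if "x \<in> SV" for x
    using lin that unfolding sv_linear_def by blast
  show "\<Delta> (Lb m) = sv_zero"
  proof (cases "m = 0 \<or> m = 1")
    case True then show ?thesis using assms(2,3) by auto
  next
    case False
    define V where "V = fst (\<Delta> (Lb m))"
    define W where "W = snd (\<Delta> (Lb m))"
    have fV: "finite {k. V k \<noteq> 0}" and fW: "finite {k. W k \<noteq> 0}"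
      using DSV[OF Lb_SV[of m]] unfolding V_def W_def SV_def fin_supp_def by auto
    have key: "(\<Sum>k\<in>{k. V k \<noteq> 0}. V k * z powi k) = 0 \<and> (\<Sum>k\<in>{k. W k \<noteq> 0}. W k * z powi k) = 0"
      if z: "z \<noteq> 0" for z
    proof -
      define l1 where "l1 = - of_int m * z powi (m - 1)"
      define l0 where "l0 = of_int (m - 1) * z powi m"
      have zm: "z powi (m - 1) * z = z powi m"
        using z by (simp add: power_int_diff field_simps)
      define x where "x = sv_add (sv_smul l0 (Lb 0)) (sv_add (sv_smul l1 (Lb 1)) (Lb m))"
      have xSV: "x \<in> SV" unfolding x_def by (intro SV_add SV_smul Lb_SV)
      have "\<Delta> x = sv_add (sv_smul l0 (\<Delta> (Lb 0))) (sv_add (sv_smul l1 (\<Delta> (Lb 1))) (\<Delta> (Lb m)))"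
        unfolding x_def by (simp add: Dadd Dsmul SV_add SV_smul Lb_SV)
      also have "\<dots> = \<Delta> (Lb m)" using assms(2,3)
        by (simp add: sv_add_def sv_smul_def sv_zero_def)
      finally have Dx: "\<Delta> x = \<Delta> (Lb m)" .
      obtain D where D: "derivation D" and DxD: "\<Delta> x = D x" using loc[OF xSV] by blast
      have Dx2: "D x = sv_add (sv_smul l0 (D (Lb 0))) (sv_add (sv_smul l1 (D (Lb 1))) (D (Lb m)))"
      proof -
        have sm: "D (sv_smul c (Lb j)) = sv_smul c (D (Lb j))" for c j
          using der_lin(2)[OF D Lb_SV Lb_SV] .
        show ?thesis unfolding x_def by (simp add: der_lin(1)[OF D] sm SV_add SV_smul Lb_SV)
      qed
      have eqV: "V k = l0 * fst (D (Lb 0)) k + l1 * fst (D (Lb 1)) k + fst (D (Lb m)) k" for k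
        unfolding V_def Dx[symmetric] DxD Dx2 by (simp add: sv_add_def sv_smul_def)
      have eqW: "W k = l0 * snd (D (Lb 0)) k + l1 * snd (D (Lb 1)) k + snd (D (Lb m)) k" for k
        unfolding W_def Dx[symmetric] DxD Dx2 by (simp add: sv_add_def sv_smul_def)
      have D0SV: "D (Lb 0) \<in> SV" using der_lin(3)[OF D Lb_SV Lb_SV] .
      define y where "y = (\<lambda>i. if i = 0 then - fst (D (Lb 1)) 1 else fst (D (Lb 0)) i / of_int i)"
      define w where "w = (\<lambda>i. if i = 0 then - 2 * snd (D (Lb 1)) 1 else snd (D (Lb 0)) i / of_int i)"
      have fy: "finite (insert 0 {i. fst (D (Lb 0)) i \<noteq> 0})" and fw: "finite (insert 0 {i. snd (D (Lb 0)) i \<noteq> 0})"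
        using D0SV unfolding SV_def fin_supp_def by auto
      have sy: "{i. y i \<noteq> 0} \<subseteq> insert 0 {i. fst (D (Lb 0)) i \<noteq> 0}" unfolding y_def by auto
      have sw: "{i. w i \<noteq> 0} \<subseteq> insert 0 {i. snd (D (Lb 0)) i \<noteq> 0}" unfolding w_def by auto
      have iL: "fst (D (Lb j)) k = of_int (k - 2*j) * y (k - j)" for j k
        unfolding y_def using inner_L[OF D] .
      have iG: "snd (D (Lb j)) k = (of_int k - 3 * of_int j / 2) * w (k - j)" for j k
        unfolding w_def using inner_G[OF D] .
      have zi1: "z powi (i + 1) = z powi i * z" for i using z by (simp add: power_int_add)
      have zim: "z powi (i + m) = z powi i * z powi m" for i using z by (simp add: power_int_add)
      have A: "(\<Sum>k\<in>{k. V k \<noteq> 0}. V k * z powi k) = 0"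
      proof (rule eval3[OF fy sy _ subset_refl, where ca = "\<lambda>k. l0 * of_int k" and cb = "\<lambda>k. l1 * of_int (k - 2)"
            and cc = "\<lambda>k. of_int (k - 2*m)" and m = m])
        show "finite {k. V k \<noteq> 0}" by (rule fV)
        show "V k = l0 * of_int k * y k + l1 * of_int (k - 2) * y (k - 1) + of_int (k - 2 * m) * y (k - m)" for k
          unfolding eqV iL by simp
        show "l0 * of_int i * z powi i * y i + l1 * of_int (i + 1 - 2) * z powi (i + 1) * y i +
            of_int (i + m - 2 * m) * z powi (i + m) * y i = 0" for i
        proof -
          have "l0 * of_int i * z powi i * y i + l1 * of_int (i + 1 - 2) * z powi (i + 1) * y i +
            of_int (i + m - 2 * m) * z powi (i + m) * y i
            = z powi i * y i * (l0 * of_int i + (l1 * z) * of_int (i - 1) + of_int (i - m) * z powi m)"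
            unfolding zi1 zim by (simp add: algebra_simps)
          also have "l1 * z = - of_int m * z powi m" unfolding l1_def using zm by (simp add: mult.assoc)
          also have "l0 * of_int i + - of_int m * z powi m * of_int (i - 1) + of_int (i - m) * z powi m = 0"
            unfolding l0_def by (simp add: algebra_simps)
          finally show ?thesis by simp
        qed
      qed
      have B: "(\<Sum>k\<in>{k. W k \<noteq> 0}. W k * z powi k) = 0"
      proof (rule eval3[OF fw sw _ subset_refl, where ca = "\<lambda>k. l0 * of_int k" and cb = "\<lambda>k. l1 * (of_int k - 3/2)"
            and cc = "\<lambda>k. of_int k - 3 * of_int m / 2" and m = m])
        show "finite {k. W k \<noteq> 0}" by (rule fW)
        show "W k = l0 * of_int k * w k + l1 * (of_int k - 3/2) * w (k - 1) + (of_int k - 3 * of_int m / 2) * w (k - m)" for k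
          unfolding eqW iG by simp
        show "l0 * of_int i * z powi i * w i + l1 * (of_int (i + 1) - 3/2) * z powi (i + 1) * w i +
            (of_int (i + m) - 3 * of_int m / 2) * z powi (i + m) * w i = 0" for i
        proof -
          have "l0 * of_int i * z powi i * w i + l1 * (of_int (i + 1) - 3/2) * z powi (i + 1) * w i +
            (of_int (i + m) - 3 * of_int m / 2) * z powi (i + m) * w i
            = z powi i * w i * (l0 * of_int i + (l1 * z) * (of_int i - 1/2) + (of_int i - of_int m / 2) * z powi m)"
            unfolding zi1 zim by (simp add: algebra_simps)
          also have "l1 * z = - of_int m * z powi m" unfolding l1_def using zm by (simp add: mult.assoc)
          also have "l0 * of_int i + - of_int m * z powi m * (of_int i - 1/2) + (of_int i - of_int m / 2) * z powi m = 0"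
            unfolding l0_def by (simp add: algebra_simps)
          finally show ?thesis by simp
        qed
      qed
      show ?thesis using A B by blast
    qed
    have V0: "V k = 0" for k
      by (rule laurent_zero[OF fV subset_refl]) (use key in blast)
    have W0: "W k = 0" for k
      by (rule laurent_zero[OF fW subset_refl]) (use key in blast)
    show ?thesis using V0 W0 unfolding V_def W_def sv_zero_def by (simp add: prod_eq_iff fun_eq_iff)
  qed
qed

end
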